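(* Let $\mathcal{L}:\mathbb{R}^d\to\mathbb{R}$ be differentiable, bounded below by a constant $\mathcal{L}^*$, and with $\nabla\mathcal{L}$ Lipschitz continuous with constant $L$. Run full-batch MoFO (as defined in the context) from an arbitrary initial point $\theta_0\in\mathbb{R}^d$ with hyperparameters $0<\beta_1<\sqrt{\beta_2}<1$ and learning rate schedule $\eta_t=\eta/\sqrt{t}$ for some $\eta>0$. Then $$\min_{0\le t\le T-1}\|\nabla\mathcal{L}(\theta_t)\|_\infty=\mathcal{O}\!\left(\frac{\log T}{\sqrt{T}}\right)\quad\text{as } T\to\infty.$$
   Context: The coordinates of $\mathbb{R}^d$ are partitioned into $B$ blocks of sizes $d_1,\dots,d_B$ with $\sum_k d_k=d$; write $z=(z^{(1)},\dots,z^{(B)})$ with $z^{(k)}\in\mathbb{R}^{d_k}$. Fix an update fraction $\alpha\%\in(0,1]$. For $z\in\mathbb{R}^d$, the top-$\alpha\%$ filter $\texttt{FLT}_\alpha(z)\in\{0,1\}^d$ is defined blockwise: in block $k$ it equals $1$ exactly on a set $S_k$ of $\lceil d_k\cdot\alpha\%\rceil$ indices $i$ whose values $|z^{(k)}_i|$ are the largest in that block (ties broken in favour of smaller indices), and $0$ elsewhere. Full-batch MoFO with hyperparameters $\beta_1,\beta_2\in(0,1)$, learning rates $\eta_t>0$ and initial point $\theta_0$: set $m_0=v_0=0\in\mathbb{R}^d$; for $t\ge1$, $g_t=\nabla\mathcal{L}(\theta_{t-1})$, $m_t=\beta_1m_{t-1}+(1-\beta_1)g_t$, $v_t=\beta_2v_{t-1}+(1-\beta_2)g_t\odot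 g_t$, $\hat m_t=m_t/(1-\beta_1^t)$, $\hat v_t=v_t/(1-\beta_2^t)$, and $\theta_t=\theta_{t-1}-\eta_t\,(\hat m_t\odot\texttt{FLT}_\alpha(m_t))/\sqrt{\hat v_t}$ (entrywise division, no $\epsilon$ term; if $\hat v_{i,t}=0$ then $\hat m_{i,t}=0$ and the corresponding quotient is taken to be $0$). $\odot$ is the entrywise product. *)

theory Defs
  imports "HOL-Analysis.Analysis" "HOL-Library.Landau_Symbols"
begin

text \<open>Coordinates are indexed by a finite linearly ordered type 'n (so d = CARD('n)).
  The block structure is given by blk :: 'n => nat, assumed monotone, so that blocks are
  contiguous index ranges.\<close>

definition block_of :: "('n \<Rightarrow> nat) \<Rightarrow> 'n \<Rightarrow> 'n set" where
  "block_of blk i = {j. blk j = blk i}"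

text \<open>Top-alpha filter: within its block, coordinate i is selected iff fewer than
  ceil(d_k * alpha) coordinates of the block precede it in the order
  "larger absolute value first, ties broken in favour of smaller index".\<close>
definition FLT :: "('n::{finite,linorder} \<Rightarrow> nat) \<Rightarrow> real \<Rightarrow> (real,'n) vec \<Rightarrow> (real,'n) vec" where
  "FLT blk alpha z = (\<chi> i.
     if card {j \<in> block_of blk i. \<bar>z$j\<bar> > \<bar>z$i\<bar> \<or> (\<bar>z$j\<bar> = \<bar>z$i\<bar> \<and> j < i)}
        < nat \<lceil>real (card (block_of blk i)) * alpha\<rceil>
     then 1 else 0)"

text \<open>Full-batch MoFO: state (theta_t, m_t, v_t) after t steps.  Division by zero is 0
  in Isabelle/HOL, matching the convention that the quotient is 0 when vhat = 0.\<close>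
fun mofo :: "('n::{finite,linorder} \<Rightarrow> nat) \<Rightarrow> real \<Rightarrow> ((real,'n) vec \<Rightarrow> (real,'n) vec) \<Rightarrow> real \<Rightarrow> real
   \<Rightarrow> (nat \<Rightarrow> real) \<Rightarrow> (real,'n) vec \<Rightarrow> nat \<Rightarrow> (real,'n) vec \<times> (real,'n) vec \<times> (real,'n) vec" where
  "mofo blk alpha grad b1 b2 eta th0 0 = (th0, 0, 0)"
| "mofo blk alpha grad b1 b2 eta th0 (Suc t) =
     (let (th, m, v) = mofo blk alpha grad b1 b2 eta th0 t;
          g = grad th;
          m' = (\<chi> i. b1 * m$i + (1 - b1) * g$i);
          v' = (\<chi> i. b2 * v$i + (1 - b2) * (g$i)^2);
          mh = (\<chi> i. m'$i / (1 - b1 ^ Suc t));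
          vh = (\<chi> i. v'$i / (1 - b2 ^ Suc t));
          f = FLT blk alpha m';
          th' = (\<chi> i. th$i - eta (Suc t) * (mh$i * f$i) / sqrt (vh$i))
      in (th', m', v'))"

definition mofo_theta where
  "mofo_theta blk alpha grad b1 b2 eta th0 t = fst (mofo blk alpha grad b1 b2 eta th0 t)"

end

theory Submission
  imports Defs
begin



lemma descent:
  fixes L :: "(real,'n::finite) vec \<Rightarrow> real" and grad :: "(real,'n) vec \<Rightarrow> (real,'n) vec"
  assumes deriv: "\<And>x. (L has_derivative (\<lambda>h. grad x \<bullet> h)) (at x)"
    and lip: "\<And>x y. norm (grad x - grad y) \<le> Lc * norm (x - y)"
  shows "L y \<le> L x + grad x \<bullet> (y - x) + \<bar>Lc\<bar> * (norm (y - x))^2"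
proof -
  define p where "p s = x + s *\<^sub>R (y - x)" for s :: real
  have D: "((\<lambda>s. L (p s)) has_real_derivative (grad (p s) \<bullet> (y - x))) (at s)" for s
    unfolding has_field_derivative_def p_def
    apply (rule has_derivative_eq_rhs[OF has_derivative_compose[OF _ deriv]])
     apply (auto intro!: derivative_eq_intros simp: fun_eq_iff inner_scaleR_right)
    done
  obtain z where z: "0 < z" "z < 1" "L (p 1) - L (p 0) = (1 - 0) * (grad (p z) \<bullet> (y - x))"
    using MVT2[of 0 1 "\<lambda>s. L (p s)" "\<lambda>s. grad (p s) \<bullet> (y - x)"] D by auto
  have "grad (p z) \<bullet> (y - x) = grad x \<bullet> (y - x) + (grad (p z) - grad x) \<bullet> (y - x)"
    by (simp add: inner_diff_left)
  also have "(grad (p z) - grad x) \<bullet> (y - x) \<le> norm (grad (p z) - grad x) * norm (y - x)"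
    by (rule norm_cauchy_schwarz)
  also have "norm (grad (p z) - grad x) \<le> Lc * norm (p z - x)" by (rule lip)
  also have "p z - x = z *\<^sub>R (y - x)" by (simp add: p_def)
  finally have "grad (p z) \<bullet> (y - x) \<le> grad x \<bullet> (y - x) + Lc * (z * norm (y - x)) * norm (y - x)"
    using z by (auto simp: mult_right_mono)
  moreover have "Lc * (z * norm (y - x)) * norm (y - x) \<le> \<bar>Lc\<bar> * (norm (y - x))^2"
  proof -
    have "Lc * (z * norm (y - x)) * norm (y - x) = (Lc * z) * (norm (y - x))^2" by (simp add: power2_eq_square)
    also have "\<dots> \<le> \<bar>Lc\<bar> * (norm (y - x))^2"
    proof (rule mult_right_mono)
      have "Lc * z \<le> \<bar>Lc * z\<bar>" by simp
      also have "\<dots> = \<bar>Lc\<bar> * z" using z by (simp add: abs_mult)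
      also have "\<dots> \<le> \<bar>Lc\<bar>" using z by (simp add: mult_left_le)
      finally show "Lc * z \<le> \<bar>Lc\<bar>" .
    qed simp
    finally show ?thesis .
  qed
  moreover have "p 1 = y" "p 0 = x" by (auto simp: p_def)
  ultimately show ?thesis using z by simp
qed



lemma rec_bound:
  fixes x :: "nat \<Rightarrow> real" and \<rho> c :: real
  assumes r: "0 \<le> \<rho>" "\<rho> < 1" and c: "0 \<le> c"
    and step: "\<And>t. x (Suc t) \<le> \<rho> * (x t + c / sqrt (real (Suc t)))"
  shows "\<exists>M\<ge>0. \<forall>t. x t \<le> M / sqrt (real (Suc t))"
proof -
  define \<sigma> where "\<sigma> = (1 + \<rho>) / 2"
  have s: "\<rho> < \<sigma>" "\<sigma> < 1" "0 < \<sigma>" using r by (auto simp: \<sigma>_def)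
  have pos: "0 < \<sigma>^2 - \<rho>^2" using s r by (simp add: power_strict_mono)
  obtain N :: nat where N: "\<rho>^2 / (\<sigma>^2 - \<rho>^2) < real N" using reals_Archimedean2 by blast
  define M where "M = max (\<sigma> * c / (1 - \<sigma>)) (\<Sum>k\<le>N. \<bar>x k\<bar> * sqrt (real (Suc k)))"
  have M0: "0 \<le> M" unfolding M_def using s c by (auto intro: max.coboundedI1)
  have Mc: "\<sigma> * (M + c) \<le> M"
  proof -
    have "\<sigma> * c / (1 - \<sigma>) \<le> M" by (simp add: M_def)
    then have "\<sigma> * c \<le> M * (1 - \<sigma>)" using s by (simp add: divide_le_eq)
    then show ?thesis by (simp add: algebra_simps)
  qed
  have key: "\<rho> / sqrt (real (Suc t)) \<le> \<sigma> / sqrt (real (Suc (Suc t)))" if "N \<le> t" for t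
  proof -
    have "\<rho>^2 \<le> (\<sigma>^2 - \<rho>^2) * real (Suc t)"
    proof -
      have "\<rho>^2 < (\<sigma>^2 - \<rho>^2) * real N" using N pos by (simp add: divide_less_eq mult.commute)
      also have "\<dots> \<le> (\<sigma>^2 - \<rho>^2) * real (Suc t)" using pos that by (intro mult_left_mono) auto
      finally show ?thesis by simp
    qed
    then have "\<rho>^2 * real (Suc (Suc t)) \<le> \<sigma>^2 * real (Suc t)" by (simp add: algebra_simps)
    then have "sqrt (\<rho>^2 * real (Suc (Suc t))) \<le> sqrt (\<sigma>^2 * real (Suc t))" by (rule real_sqrt_le_mono)
    then have "\<rho> * sqrt (real (Suc (Suc t))) \<le> \<sigma> * sqrt (real (Suc t))"
      using r s by (simp add: real_sqrt_mult)
    then show ?thesis by (simp add: divide_simps)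
  qed
  have "x t \<le> M / sqrt (real (Suc t))" for t
  proof (induction t)
    case 0
    have "\<bar>x 0\<bar> * sqrt (real (Suc 0)) \<le> (\<Sum>k\<le>N. \<bar>x k\<bar> * sqrt (real (Suc k)))"
      by (rule member_le_sum) auto
    then show ?case unfolding M_def by simp
  next
    case (Suc t)
    show ?case
    proof (cases "Suc t \<le> N")
      case True
      have "\<bar>x (Suc t)\<bar> * sqrt (real (Suc (Suc t))) \<le> (\<Sum>k\<le>N. \<bar>x k\<bar> * sqrt (real (Suc k)))"
        using True by (intro member_le_sum) auto
      then have "x (Suc t) * sqrt (real (Suc (Suc t))) \<le> M" unfolding M_def
        by (smt (verit, best) abs_ge_self max.cobounded2 mult_right_mono real_sqrt_ge_zero of_nat_0_le_iff)
      then show ?thesis by (simp add: le_divide_eq)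
    next
      case False
      then have Nt: "N \<le> t" by simp
      have "x (Suc t) \<le> \<rho> * (M / sqrt (real (Suc t)) + c / sqrt (real (Suc t)))"
        using step[of t] Suc.IH r by (smt (verit) mult_left_mono)
      also have "\<dots> = (\<rho> / sqrt (real (Suc t))) * (M + c)" by (simp add: add_divide_distrib[symmetric])
      also have "\<dots> \<le> (\<sigma> / sqrt (real (Suc (Suc t)))) * (M + c)"
        using key[OF Nt] M0 c by (intro mult_right_mono) auto
      also have "\<dots> = \<sigma> * (M + c) / sqrt (real (Suc (Suc t)))" by simp
      also have "\<dots> \<le> M / sqrt (real (Suc (Suc t)))" using Mc by (intro divide_right_mono) auto
      finally show ?thesis .
    qed
  qed
  then show ?thesis using M0 by blast
qed

lemma harm_bound: "1 \<le> T \<Longrightarrow> (\<Sum>t<T. 1 / real (Suc t)) \<le> 1 + ln (real T)"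
proof (induction T rule: dec_induct)
  case base
  then show ?case by simp
next
  case (step T)
  have "ln (real T / real (Suc T)) \<le> real T / real (Suc T) - 1"
    using step by (intro ln_le_minus_one) auto
  also have "\<dots> = - 1 / real (Suc T)" by (simp add: field_simps)
  finally have "1 / real (Suc T) \<le> ln (real (Suc T)) - ln (real T)"
    using step by (simp add: ln_div)
  then show ?case using step by simp
qed



lemma FLT_01: "FLT blk alpha z $ i = 0 \<or> FLT blk alpha z $ i = 1"
  by (simp add: FLT_def)

lemma FLT_top:
  fixes z :: "(real,'n::{finite,linorder}) vec"
  assumes "0 < alpha"
  shows "\<exists>k. FLT blk alpha z $ k = 1 \<and> \<bar>z$j\<bar> \<le> \<bar>z$k\<bar>"
proof -
  define B where "B = block_of blk j"
  have jB: "j \<in> B" by (simp add: B_def block_of_def)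
  have fB: "finite B" by simp
  define mx where "mx = Max ((\<lambda>i. \<bar>z$i\<bar>) ` B)"
  have mxin: "mx \<in> (\<lambda>i. \<bar>z$i\<bar>) ` B" unfolding mx_def using jB by (intro Max_in) auto
  have mxge: "\<bar>z$i\<bar> \<le> mx" if "i \<in> B" for i unfolding mx_def using that by (intro Max_ge) auto
  define S where "S = {i\<in>B. \<bar>z$i\<bar> = mx}"
  have Sne: "S \<noteq> {}" using mxin by (auto simp: S_def)
  define k where "k = Min S"
  have kS: "k \<in> S" unfolding k_def using Sne by (intro Min_in) auto
  have kmin: "k \<le> i" if "i \<in> S" for i unfolding k_def using that by (intro Min_le) auto
  have Bk: "block_of blk k = B" using kS by (auto simp: S_def B_def block_of_def)
  have empty: "{i \<in> block_of blk k. \<bar>z$i\<bar> > \<bar>z$k\<bar> \<or> (\<bar>z$i\<bar> = \<bar>z$k\<bar> \<and> i < k)} = {}"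
  proof -
    { fix i assume i: "i \<in> B" "\<bar>z$i\<bar> > \<bar>z$k\<bar> \<or> (\<bar>z$i\<bar> = \<bar>z$k\<bar> \<and> i < k)"
      have zk: "\<bar>z$k\<bar> = mx" using kS by (simp add: S_def)
      have False
      proof (cases "\<bar>z$i\<bar> > \<bar>z$k\<bar>")
        case True then show ?thesis using mxge[OF i(1)] zk by simp
      next
        case False
        then have "i \<in> S" "i < k" using i zk by (auto simp: S_def)
        then show ?thesis using kmin by force
      qed }
    then show ?thesis using Bk by blast
  qed
  have cardpos: "0 < card (block_of blk k)" using Bk jB fB by (auto simp: card_gt_0_iff)
  have "0 < real (card (block_of blk k)) * alpha" using cardpos assms by simp
  then have "0 < nat \<lceil>real (card (block_of blk k)) * alpha\<rceil>" by simp
  then have c0: "card {i \<in> block_of blk k. \<bar>z$i\<bar> > \<bar>z$k\<bar> \<or> (\<bar>z$i\<bar> = \<bar>z$k\<bar> \<and> i < k)} < nat \<lceil>real (card (block_of blk k)) * alpha\<rceil>"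
    unfolding empty by simp
  have "FLT blk alpha z $ k = 1" unfolding FLT_def using c0 by simp
  moreover have "\<bar>z$j\<bar> \<le> \<bar>z$k\<bar>" using mxge[OF jB] kS by (simp add: S_def)
  ultimately show ?thesis by blast
qed

lemma infnorm_attained:
  fixes x :: "real^'n"
  shows "\<exists>j. infnorm x = \<bar>x$j\<bar>"
proof -
  have eq: "{\<bar>x$i\<bar> |i. i\<in>UNIV} = range (\<lambda>i. \<bar>x$i\<bar>)" by auto
  have "infnorm x = Max (range (\<lambda>i. \<bar>x$i\<bar>))"
    unfolding infnorm_cart eq by (intro cSup_eq_Max) auto
  moreover have "Max (range (\<lambda>i. \<bar>x$i\<bar>)) \<in> range (\<lambda>i. \<bar>x$i\<bar>)" by (intro Max_in) auto
  then obtain j where "Max (range (\<lambda>i. \<bar>x$i\<bar>)) = \<bar>x$j\<bar>" by blast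
  ultimately show ?thesis by metis
qed



locale mctx =
  fixes \<L> :: "(real,'n::{finite,linorder}) vec \<Rightarrow> real"
    and grad :: "(real,'n) vec \<Rightarrow> (real,'n) vec"
    and blk :: "'n \<Rightarrow> nat"
    and Lstar Lc alpha b1 b2 eta :: real
    and th0 :: "(real,'n) vec"
  assumes deriv: "\<And>x. (\<L> has_derivative (\<lambda>h. grad x \<bullet> h)) (at x)"
    and lower: "\<And>x. Lstar \<le> \<L> x"
    and lipschitz: "\<And>x y. norm (grad x - grad y) \<le> Lc * norm (x - y)"
    and alpha: "0 < alpha"
    and betas: "0 < b1" "b1 < sqrt b2" "sqrt b2 < 1"
    and eta: "0 < eta"
begin

definition "st t = mofo blk alpha grad b1 b2 (\<lambda>t. eta / sqrt (real t)) th0 t"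
definition "th t = fst (st t)"
definition "m t = fst (snd (st t))"
definition "v t = snd (snd (st t))"
definition "G t = grad (th t)"
definition "u t = (\<chi> i. (m t $ i / (1 - b1 ^ t) * FLT blk alpha (m t) $ i) / sqrt (v t $ i / (1 - b2 ^ t)))"

lemma m0: "m 0 = 0" and v0: "v 0 = 0" by (simp_all add: m_def v_def st_def)

lemma m_Suc: "m (Suc t) $ i = b1 * m t $ i + (1 - b1) * G t $ i"
  by (simp add: m_def G_def th_def st_def Let_def case_prod_unfold)

lemma v_Suc: "v (Suc t) $ i = b2 * v t $ i + (1 - b2) * (G t $ i)^2"
  by (simp add: v_def G_def th_def st_def Let_def case_prod_unfold)

lemma th_Suc: "th (Suc t) = th t - (eta / sqrt (real (Suc t))) *\<^sub>R u (Suc t)"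
  unfolding vec_eq_iff
  by (simp add: th_def m_def v_def u_def st_def Let_def case_prod_unfold)

lemma b_facts: "b1 < 1" "0 < b2" "b2 < 1" "b1^2 < b2"
proof -
  show "b1 < 1" using betas by linarith
  have "0 < sqrt b2" using betas by linarith
  then show "0 < b2" by simp
  show "b2 < 1" using betas by simp
  have "b1^2 < (sqrt b2)^2" using betas by (intro power_strict_mono) auto
  then show "b1^2 < b2" using \<open>0 < b2\<close> by simp
qed

lemma v_nonneg: "0 \<le> v t $ i"
  using b_facts by (induction t) (auto simp: v0 v_Suc)

definition "A = (1 - b1)^2 * b2 / ((b2 - b1^2) * (1 - b2))"
definition "K = sqrt A / (1 - b1)"

lemma A_pos: "0 < A" unfolding A_def using b_facts betas by (intro divide_pos_pos mult_pos_pos) auto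

lemma K_nonneg: "0 \<le> K" unfolding K_def using A_pos b_facts by simp

lemma key_ineq:
  fixes mm g :: real
  shows "(b1 * mm + (1 - b1) * g)^2 \<le> b2 * mm^2 + A * (1 - b2) * g^2"
proof -
  define D where "D = b2 - b1^2"
  have D: "0 < D" using b_facts by (simp add: D_def)
  have "A * (1 - b2) = b2 * (1 - b1)^2 / D" using b_facts by (simp add: A_def D_def)
  then have "A * (1 - b2) * g^2 = b2 * (1 - b1)^2 / D * g^2" by simp
  moreover have "b2 * mm^2 + b2 * (1 - b1)^2 / D * g^2 - (b1 * mm + (1 - b1) * g)^2
      = (D * mm - b1 * (1 - b1) * g)^2 / D"
    using D by (simp add: field_simps D_def power2_eq_square)
  moreover have "0 \<le> (D * mm - b1 * (1 - b1) * g)^2 / D" using D by simp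
  ultimately show ?thesis by linarith
qed

lemma mv_bound: "(m t $ i)^2 \<le> A * v t $ i"
proof (induction t)
  case 0 then show ?case by (simp add: m0 v0)
next
  case (Suc t)
  have "(m (Suc t) $ i)^2 \<le> b2 * (m t $ i)^2 + A * (1 - b2) * (G t $ i)^2"
    unfolding m_Suc by (rule key_ineq)
  also have "\<dots> \<le> b2 * (A * v t $ i) + A * (1 - b2) * (G t $ i)^2"
    using Suc b_facts by (intro add_right_mono mult_left_mono) auto
  also have "\<dots> = A * v (Suc t) $ i" by (simp add: v_Suc algebra_simps)
  finally show ?case .
qed

lemma u_bound:
  assumes "0 < t"
  shows "\<bar>u t $ i\<bar> \<le> K"
proof -
  have b1t: "1 - b1 \<le> 1 - b1 ^ t" "0 < 1 - b1 ^ t"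
  proof -
    have "b1 ^ t \<le> b1 ^ 1" using assms betas b_facts by (intro power_decreasing) auto
    then show "1 - b1 \<le> 1 - b1 ^ t" by simp
    then show "0 < 1 - b1 ^ t" using b_facts by simp
  qed
  have b2t: "0 < 1 - b2 ^ t" "1 - b2 ^ t \<le> 1"
    using b_facts assms by (auto simp: power_less_one_iff)
  have f: "\<bar>FLT blk alpha (m t) $ i\<bar> \<le> 1" by (simp add: FLT_def)
  show ?thesis
  proof (cases "v t $ i = 0")
    case True
    then show ?thesis using K_nonneg by (simp add: u_def)
  next
    case False
    then have vp: "0 < v t $ i" using v_nonneg[of t i] by simp
    have mle: "\<bar>m t $ i\<bar> \<le> sqrt A * sqrt (v t $ i)"
      using mv_bound[of t i] by (metis real_le_rsqrt power2_abs real_sqrt_mult)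
    have "\<bar>u t $ i\<bar> = \<bar>m t $ i\<bar> / (1 - b1 ^ t) * \<bar>FLT blk alpha (m t) $ i\<bar> / (sqrt (v t $ i) / sqrt (1 - b2 ^ t))"
      using b1t b2t vp by (simp add: u_def abs_mult real_sqrt_divide)
    also have "\<dots> \<le> (sqrt A * sqrt (v t $ i)) / (1 - b1) * 1 / (sqrt (v t $ i) / 1)"
      using b1t b2t vp mle f b_facts
      by (intro divide_mono mult_mono frac_le) auto
    also have "\<dots> = K" using vp by (simp add: K_def)
    finally show ?thesis .
  qed
qed



definition "dd = real CARD('n)"
definition "c0 = \<bar>Lc\<bar> * eta * (dd * K)"

lemma c0_nonneg: "0 \<le> c0" using K_nonneg eta by (simp add: c0_def dd_def)

lemma u_norm: "norm (u (Suc t)) \<le> dd * K"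
proof -
  have "norm (u (Suc t)) \<le> (\<Sum>i\<in>UNIV. \<bar>u (Suc t) $ i\<bar>)" by (rule norm_le_l1_cart)
  also have "\<dots> \<le> (\<Sum>i\<in>(UNIV::'n set). K)" by (intro sum_mono u_bound) auto
  finally show ?thesis by (simp add: dd_def)
qed

lemma step_norm: "norm (th (Suc t) - th t) \<le> eta / sqrt (real (Suc t)) * (dd * K)"
proof -
  have "norm (th (Suc t) - th t) = eta / sqrt (real (Suc t)) * norm (u (Suc t))"
    using eta by (simp add: th_Suc)
  also have "\<dots> \<le> eta / sqrt (real (Suc t)) * (dd * K)"
    using eta u_norm by (intro mult_left_mono) auto
  finally show ?thesis .
qed

lemma G_diff: "\<bar>G (Suc t) $ i - G t $ i\<bar> \<le> c0 / sqrt (real (Suc t))"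
proof -
  have "\<bar>G (Suc t) $ i - G t $ i\<bar> \<le> norm (G (Suc t) - G t)"
    using component_le_norm_cart[of "G (Suc t) - G t" i] by simp
  also have "\<dots> \<le> Lc * norm (th (Suc t) - th t)" unfolding G_def by (rule lipschitz)
  also have "\<dots> \<le> \<bar>Lc\<bar> * norm (th (Suc t) - th t)" by (intro mult_right_mono) auto
  also have "\<dots> \<le> \<bar>Lc\<bar> * (eta / sqrt (real (Suc t)) * (dd * K))"
    by (intro mult_left_mono step_norm) auto
  also have "\<dots> = c0 / sqrt (real (Suc t))" by (simp add: c0_def)
  finally show ?thesis .
qed

definition "E t i = m (Suc t) $ i - (1 - b1 ^ Suc t) * G t $ i"
definition "Rr t i = max 0 (sqrt (v (Suc t) $ i) - sqrt (1 - b2 ^ Suc t) * \<bar>G t $ i\<bar>)"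
definition "SE t = (\<Sum>i\<in>UNIV. \<bar>E t i\<bar>)"
definition "SR t = (\<Sum>i\<in>UNIV. Rr t i)"

lemma E_rec: "\<bar>E (Suc t) i\<bar> \<le> b1 * (\<bar>E t i\<bar> + c0 / sqrt (real (Suc t)))"
proof -
  have eq: "E (Suc t) i = b1 * (E t i + (1 - b1 ^ Suc t) * (G t $ i - G (Suc t) $ i))"
    unfolding E_def m_Suc[of "Suc t"] by (simp add: algebra_simps)
  have p: "0 \<le> 1 - b1 ^ Suc t" "1 - b1 ^ Suc t \<le> 1"
    using betas b_facts power_le_one[of b1 "Suc t"] by auto
  have "\<bar>(1 - b1 ^ Suc t) * (G t $ i - G (Suc t) $ i)\<bar> \<le> 1 * \<bar>G (Suc t) $ i - G t $ i\<bar>"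
    using p mult_left_le_one_le[of "\<bar>G (Suc t) $ i - G t $ i\<bar>" "1 - b1 ^ Suc t"] by (simp add: abs_mult abs_minus_commute)
  also have "\<dots> \<le> c0 / sqrt (real (Suc t))" using G_diff by simp
  finally have "\<bar>E t i + (1 - b1 ^ Suc t) * (G t $ i - G (Suc t) $ i)\<bar> \<le> \<bar>E t i\<bar> + c0 / sqrt (real (Suc t))"
    by (smt (verit) abs_triangle_ineq)
  then show ?thesis unfolding eq using betas by (simp add: abs_mult mult_left_mono)
qed

lemma SE_rec: "SE (Suc t) \<le> b1 * (SE t + dd * c0 / sqrt (real (Suc t)))"
proof -
  have "SE (Suc t) \<le> (\<Sum>i\<in>UNIV. b1 * (\<bar>E t i\<bar> + c0 / sqrt (real (Suc t))))"
    unfolding SE_def by (intro sum_mono E_rec)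
  also have "\<dots> = b1 * (SE t + dd * c0 / sqrt (real (Suc t)))"
    by (simp add: SE_def dd_def sum_distrib_left[symmetric] sum.distrib)
  finally show ?thesis .
qed

lemma Rr_nonneg: "0 \<le> Rr t i" by (simp add: Rr_def)

lemma Rr_rec: "Rr (Suc t) i \<le> sqrt b2 * (Rr t i + c0 / sqrt (real (Suc t)))"
proof -
  define g where "g = G (Suc t) $ i"
  define \<delta> where "\<delta> = \<bar>G (Suc t) $ i - G t $ i\<bar>"
  define a where "a = sqrt (1 - b2 ^ Suc t) * \<bar>g\<bar>"
  define b where "b = \<delta> + Rr t i"
  define P where "P = sqrt (1 - b2 ^ Suc (Suc t)) * \<bar>g\<bar>"
  have q1: "0 \<le> 1 - b2 ^ Suc t" "1 - b2 ^ Suc t \<le> 1" "0 \<le> 1 - b2 ^ Suc (Suc t)"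
    using b_facts power_le_one[of b2 "Suc t"] power_le_one[of b2 "Suc (Suc t)"] by auto
  have a0: "0 \<le> a" using q1 by (simp add: a_def)
  have b0: "0 \<le> b" using Rr_nonneg by (simp add: b_def \<delta>_def)
  have P0: "0 \<le> P" using q1 by (simp add: P_def)
  have "sqrt (v (Suc t) $ i) \<le> sqrt (1 - b2 ^ Suc t) * \<bar>G t $ i\<bar> + Rr t i"
    by (simp add: Rr_def)
  also have "sqrt (1 - b2 ^ Suc t) * \<bar>G t $ i\<bar> \<le> sqrt (1 - b2 ^ Suc t) * (\<bar>g\<bar> + \<delta>)"
    using q1 by (intro mult_left_mono) (auto simp: g_def \<delta>_def)
  also have "\<dots> \<le> a + \<delta>"
    using q1 by (simp add: a_def distrib_left \<delta>_def mult_left_le_one_le)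
  finally have "sqrt (v (Suc t) $ i) \<le> a + b" by (simp add: b_def)
  then have vle: "v (Suc t) $ i \<le> (a + b)^2" by (rule sqrt_le_D)
  have Psq: "P^2 = b2 * a^2 + (1 - b2) * g^2"
    using q1 by (simp add: P_def a_def power_mult_distrib algebra_simps)
  have "(sqrt b2 * a)^2 \<le> P^2" using Psq b_facts by (simp add: power_mult_distrib)
  then have sa: "sqrt b2 * a \<le> P" using P0 by (rule power2_le_imp_le)
  have "v (Suc (Suc t)) $ i = b2 * v (Suc t) $ i + (1 - b2) * g^2" by (simp add: v_Suc g_def)
  also have "\<dots> \<le> b2 * (a + b)^2 + (1 - b2) * g^2" using vle b_facts by (intro add_right_mono mult_left_mono) auto
  also have "\<dots> \<le> (P + sqrt b2 * b)^2"
  proof -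
    have ss: "(sqrt b2 * b) * (sqrt b2 * a) = b2 * (a * b)"
    proof -
      have "(sqrt b2 * b) * (sqrt b2 * a) = (sqrt b2 * sqrt b2) * (a * b)" by (simp only: ac_simps)
      moreover have "sqrt b2 * sqrt b2 = b2" using b_facts by simp
      ultimately show ?thesis by metis
    qed
    have "b2 * (a + b)^2 + (1 - b2) * g^2 = P^2 + 2 * (b2 * (a * b)) + b2 * b^2"
      using Psq by (simp add: power2_eq_square algebra_simps)
    also have "\<dots> = P^2 + 2 * (sqrt b2 * b) * (sqrt b2 * a) + b2 * b^2" using ss by (simp only: mult.assoc)
    finally have "b2 * (a + b)^2 + (1 - b2) * g^2 = P^2 + 2 * (sqrt b2 * b) * (sqrt b2 * a) + b2 * b^2" .
    then have "b2 * (a + b)^2 + (1 - b2) * g^2 = P^2 + 2 * (sqrt b2 * b) * (sqrt b2 * a) + b2 * b^2" .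
    also have "\<dots> \<le> P^2 + 2 * (sqrt b2 * b) * P + b2 * b^2"
      using sa b0 b_facts by (intro add_right_mono add_left_mono mult_left_mono) auto
    also have "\<dots> = (P + sqrt b2 * b)^2"
    proof -
      have "(sqrt b2 * b)^2 = b2 * b^2" using b_facts by (simp add: power_mult_distrib)
      then show ?thesis by (simp add: power2_sum)
    qed
    finally show ?thesis .
  qed
  finally have "sqrt (v (Suc (Suc t)) $ i) \<le> sqrt ((P + sqrt b2 * b)^2)"
    by (rule real_sqrt_le_mono)
  then have "sqrt (v (Suc (Suc t)) $ i) \<le> P + sqrt b2 * b"
    using P0 b0 b_facts by simp
  then have "Rr (Suc t) i \<le> sqrt b2 * b"
    using b0 b_facts by (simp add: Rr_def P_def g_def)
  also have "\<dots> \<le> sqrt b2 * (Rr t i + c0 / sqrt (real (Suc t)))"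
    using G_diff[of t i] b_facts by (intro mult_left_mono) (auto simp: b_def \<delta>_def)
  finally show ?thesis .
qed

lemma SR_rec: "SR (Suc t) \<le> sqrt b2 * (SR t + dd * c0 / sqrt (real (Suc t)))"
proof -
  have "SR (Suc t) \<le> (\<Sum>i\<in>UNIV. sqrt b2 * (Rr t i + c0 / sqrt (real (Suc t))))"
    unfolding SR_def by (intro sum_mono Rr_rec)
  also have "\<dots> = sqrt b2 * (SR t + dd * c0 / sqrt (real (Suc t)))"
    by (simp add: SR_def dd_def sum_distrib_left[symmetric] sum.distrib)
  finally show ?thesis .
qed

lemma SE_SR_bound: "\<exists>M\<ge>0. \<forall>t. SE t + SR t \<le> M / sqrt (real (Suc t))"
proof -
  have dc: "0 \<le> dd * c0" using c0_nonneg by (simp add: dd_def)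
  obtain M1 where M1: "M1 \<ge> 0" "\<forall>t. SE t \<le> M1 / sqrt (real (Suc t))"
    using rec_bound[of b1 "dd * c0" SE] SE_rec betas b_facts dc by (auto simp: times_divide_eq_right)
  obtain M2 where M2: "M2 \<ge> 0" "\<forall>t. SR t \<le> M2 / sqrt (real (Suc t))"
    using rec_bound[of "sqrt b2" "dd * c0" SR] SR_rec betas b_facts dc by (auto simp: times_divide_eq_right)
  have "SE t + SR t \<le> (M1 + M2) / sqrt (real (Suc t))" for t
    using M1 M2 by (simp add: add_divide_distrib add_mono)
  then show ?thesis using M1 M2 by (intro exI[of _ "M1 + M2"]) auto
qed



definition "q = sqrt (1 - b2)"
definition "X t i = Rr t i / q + \<bar>E t i\<bar> / ((1 - b1) * q)"

lemma q_pos: "0 < q" using b_facts by (simp add: q_def)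

lemma term_lower:
  shows "- X t i \<le> G t $ i * u (Suc t) $ i"
    and "FLT blk alpha (m (Suc t)) $ i = 1 \<Longrightarrow> \<bar>G t $ i\<bar> - X t i \<le> G t $ i * u (Suc t) $ i"
proof -
  define g where "g = G t $ i"
  define a where "a = 1 - b1 ^ Suc t"
  define bb where "bb = 1 - b2 ^ Suc t"
  define mm where "mm = m (Suc t) $ i"
  define vv where "vv = v (Suc t) $ i"
  define f where "f = FLT blk alpha (m (Suc t)) $ i"
  define R' where "R' = Rr t i / q"
  define E' where "E' = \<bar>E t i\<bar> / ((1 - b1) * q)"
  have Xeq: "X t i = R' + E'" by (simp add: X_def R'_def E'_def)
  have R'0: "0 \<le> R'" using Rr_nonneg q_pos by (simp add: R'_def)
  have E'0: "0 \<le> E'" using q_pos b_facts by (simp add: E'_def)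
  have ha: "1 - b1 \<le> a" "0 < a"
  proof -
    have "b1 ^ Suc t \<le> b1 ^ 1" using betas b_facts by (intro power_decreasing) auto
    then show "1 - b1 \<le> a" by (simp add: a_def)
    then show "0 < a" using b_facts by simp
  qed
  have hb: "1 - b2 \<le> bb" "0 < bb"
  proof -
    have "b2 ^ Suc t \<le> b2 ^ 1" using b_facts by (intro power_decreasing) auto
    then show "1 - b2 \<le> bb" by (simp add: bb_def)
    then show "0 < bb" using b_facts by simp
  qed
  have hb1: "bb \<le> 1" using b_facts by (simp add: bb_def)
  have vvg: "(1 - b2) * g^2 \<le> vv"
    using v_nonneg[of t i] b_facts by (simp add: vv_def v_Suc g_def)
  have mmeq: "mm = a * g + E t i" by (simp add: mm_def E_def a_def g_def)
  have ueq: "u (Suc t) $ i = (mm / a * f) / sqrt (vv / bb)"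
    by (simp add: u_def mm_def a_def f_def vv_def bb_def)
  have f01: "f = 0 \<or> f = 1" by (simp add: f_def FLT_def)
  have main: "- X t i \<le> g * u (Suc t) $ i \<and> (f = 1 \<longrightarrow> \<bar>g\<bar> - X t i \<le> g * u (Suc t) $ i)"
  proof (cases "vv = 0")
    case True
    then have "g = 0" using vvg b_facts by (simp add: mult_le_0_iff)
    then show ?thesis using R'0 E'0 Xeq by simp
  next
    case False
    then have vp: "0 < vv" using v_nonneg[of "Suc t" i] by (simp add: vv_def)
    define w where "w = sqrt (vv / bb)"
    have wp: "0 < w" using vp hb by (simp add: w_def)
    have qg: "q * \<bar>g\<bar> \<le> w"
    proof -
      have "(q * \<bar>g\<bar>)^2 = (1 - b2) * g^2" using b_facts by (simp add: q_def power_mult_distrib)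
      also have "\<dots> \<le> vv" by (rule vvg)
      also have "vv \<le> vv / bb" using hb hb1 vp by (simp add: le_divide_eq mult_left_le_one_le)
      finally have "(q * \<bar>g\<bar>)^2 \<le> vv / bb" .
      then show ?thesis unfolding w_def by (rule real_le_rsqrt)
    qed
    have gw: "\<bar>g\<bar> / w \<le> 1 / q" using qg wp q_pos by (simp add: divide_simps mult.commute)
    have cross: "\<bar>(g / w) * (E t i / a)\<bar> \<le> E'"
    proof -
      have "\<bar>(g / w) * (E t i / a)\<bar> = (\<bar>g\<bar> / w) * (\<bar>E t i\<bar> / a)" using wp ha by (simp add: abs_mult)
      also have "\<dots> \<le> (1 / q) * (\<bar>E t i\<bar> / (1 - b1))"
      proof (rule mult_mono[OF gw])
        show "\<bar>E t i\<bar> / a \<le> \<bar>E t i\<bar> / (1 - b1)" using ha b_facts by (intro divide_left_mono) auto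
      qed (use q_pos wp ha in auto)
      also have "\<dots> = E'" by (simp add: E'_def)
      finally show ?thesis .
    qed
    show ?thesis
    proof (cases "f = 1")
      case False
      then have "f = 0" using f01 by simp
      then show ?thesis using ueq R'0 E'0 Xeq False by simp
    next
      case True
      have tm: "g * u (Suc t) $ i = g^2 / w + (g / w) * (E t i / a)"
        unfolding ueq True mmeq w_def[symmetric] using ha wp by (simp add: field_simps power2_eq_square)
      have sq: "0 \<le> g^2 / w" using wp by simp
      have part1: "- X t i \<le> g * u (Suc t) $ i" using tm sq cross Xeq R'0 by (smt (verit) abs_le_iff)
      have wle: "w \<le> \<bar>g\<bar> + R'"
      proof -
        have "sqrt vv \<le> sqrt bb * \<bar>g\<bar> + Rr t i" by (simp add: Rr_def vv_def bb_def g_def)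
        have sbq: "q \<le> sqrt bb" using hb by (simp add: q_def)
        have "w = sqrt vv / sqrt bb" by (simp add: w_def real_sqrt_divide)
        also have "\<dots> \<le> (sqrt bb * \<bar>g\<bar> + Rr t i) / sqrt bb"
          using \<open>sqrt vv \<le> _\<close> hb by (intro divide_right_mono) auto
        also have "\<dots> = \<bar>g\<bar> + Rr t i / sqrt bb" using hb by (simp add: field_simps)
        also have "Rr t i / sqrt bb \<le> Rr t i / q"
          using sbq q_pos Rr_nonneg hb by (intro divide_left_mono) auto
        finally show ?thesis by (simp add: R'_def)
      qed
      have "\<bar>g\<bar> - R' \<le> g^2 / w"
      proof (cases "\<bar>g\<bar> - R' \<le> 0")
        case True then show ?thesis using sq by linarith
      next
        case False
        have "(\<bar>g\<bar> - R') * w \<le> (\<bar>g\<bar> - R') * (\<bar>g\<bar> + R')" using False wle by (intro mult_left_mono) auto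
        also have "\<dots> \<le> g^2" by (simp add: power2_eq_square algebra_simps)
        finally show ?thesis using wp by (simp add: le_divide_eq)
      qed
      then have "\<bar>g\<bar> - X t i \<le> g * u (Suc t) $ i" using tm cross Xeq by (smt (verit) abs_le_iff)
      then show ?thesis using part1 by simp
    qed
  qed
  show "- X t i \<le> G t $ i * u (Suc t) $ i" using main by (simp add: g_def)
  show "FLT blk alpha (m (Suc t)) $ i = 1 \<Longrightarrow> \<bar>G t $ i\<bar> - X t i \<le> G t $ i * u (Suc t) $ i"
    using main by (simp add: g_def f_def)
qed



definition "C1 = 2 / (1 - b1) + 1 / ((1 - b1) * q) + 1 / q"

lemma SE_nonneg: "0 \<le> SE t" by (simp add: SE_def sum_nonneg)
lemma SR_nonneg: "0 \<le> SR t" by (simp add: SR_def sum_nonneg Rr_nonneg)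

lemma C1_nonneg: "0 \<le> C1" using b_facts q_pos by (simp add: C1_def)

lemma inner_lower: "infnorm (G t) - C1 * (SE t + SR t) \<le> G t \<bullet> u (Suc t)"
proof -
  obtain j where j: "infnorm (G t) = \<bar>G t $ j\<bar>" using infnorm_attained by blast
  obtain k where k: "FLT blk alpha (m (Suc t)) $ k = 1" "\<bar>m (Suc t) $ j\<bar> \<le> \<bar>m (Suc t) $ k\<bar>"
    using FLT_top[OF alpha] by blast
  define a where "a = 1 - b1 ^ Suc t"
  have ha: "1 - b1 \<le> a" "0 < a"
  proof -
    have "b1 ^ Suc t \<le> b1 ^ 1" using betas b_facts by (intro power_decreasing) auto
    then show "1 - b1 \<le> a" by (simp add: a_def)
    then show "0 < a" using b_facts by simp
  qed
  have inner_eq: "G t \<bullet> u (Suc t) = (\<Sum>i\<in>UNIV. G t $ i * u (Suc t) $ i)"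
    by (simp add: inner_vec_def)
  have s1: "(\<Sum>i\<in>UNIV. G t $ i * u (Suc t) $ i) \<ge> \<bar>G t $ k\<bar> - (\<Sum>i\<in>UNIV. X t i)"
  proof -
    have "(\<Sum>i\<in>UNIV. G t $ i * u (Suc t) $ i) = G t $ k * u (Suc t) $ k + (\<Sum>i\<in>UNIV - {k}. G t $ i * u (Suc t) $ i)"
      by (simp add: sum.remove)
    moreover have "(\<Sum>i\<in>UNIV. X t i) = X t k + (\<Sum>i\<in>UNIV - {k}. X t i)"
      by (simp add: sum.remove)
    moreover have "(\<Sum>i\<in>UNIV - {k}. - X t i) \<le> (\<Sum>i\<in>UNIV - {k}. G t $ i * u (Suc t) $ i)"
      by (intro sum_mono term_lower(1))
    moreover have "\<bar>G t $ k\<bar> - X t k \<le> G t $ k * u (Suc t) $ k" by (rule term_lower(2)[OF k(1)])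
    ultimately show ?thesis by (simp add: sum_negf)
  qed
  have sX: "(\<Sum>i\<in>UNIV. X t i) = SR t / q + SE t / ((1 - b1) * q)"
    by (simp add: X_def SR_def SE_def sum.distrib sum_divide_distrib)
  have Ek: "\<bar>E t k\<bar> \<le> SE t" and Ej: "\<bar>E t j\<bar> \<le> SE t"
    unfolding SE_def by (intro member_le_sum; simp)+
  have gk: "\<bar>G t $ j\<bar> - \<bar>G t $ k\<bar> \<le> (\<bar>E t k\<bar> + \<bar>E t j\<bar>) / (1 - b1)"
  proof (cases "\<bar>G t $ j\<bar> - \<bar>G t $ k\<bar> \<le> 0")
    case True
    moreover have "0 \<le> (\<bar>E t k\<bar> + \<bar>E t j\<bar>) / (1 - b1)" using b_facts by simp
    ultimately show ?thesis by linarith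
  next
    case False
    have mk: "m (Suc t) $ k = a * G t $ k + E t k" and mj: "m (Suc t) $ j = a * G t $ j + E t j"
      by (simp_all add: E_def a_def)
    have "a * \<bar>G t $ j\<bar> - \<bar>E t j\<bar> \<le> a * \<bar>G t $ k\<bar> + \<bar>E t k\<bar>"
    proof -
      have "a * \<bar>G t $ j\<bar> - \<bar>E t j\<bar> \<le> \<bar>m (Suc t) $ j\<bar>"
        unfolding mj using ha abs_triangle_ineq2[of "a * G t $ j" "- E t j"] by (simp add: abs_mult)
      also have "\<dots> \<le> \<bar>m (Suc t) $ k\<bar>" by (rule k(2))
      also have "\<dots> \<le> a * \<bar>G t $ k\<bar> + \<bar>E t k\<bar>"
        unfolding mk using ha abs_triangle_ineq[of "a * G t $ k" "E t k"] by (simp add: abs_mult)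
      finally show ?thesis .
    qed
    then have "a * (\<bar>G t $ j\<bar> - \<bar>G t $ k\<bar>) \<le> \<bar>E t k\<bar> + \<bar>E t j\<bar>" by (simp add: algebra_simps)
    moreover have "(1 - b1) * (\<bar>G t $ j\<bar> - \<bar>G t $ k\<bar>) \<le> a * (\<bar>G t $ j\<bar> - \<bar>G t $ k\<bar>)"
      using ha False by (intro mult_right_mono) auto
    ultimately have "(1 - b1) * (\<bar>G t $ j\<bar> - \<bar>G t $ k\<bar>) \<le> \<bar>E t k\<bar> + \<bar>E t j\<bar>" by linarith
    then show ?thesis using b_facts by (simp add: le_divide_eq mult.commute)
  qed
  have gk2: "(\<bar>E t k\<bar> + \<bar>E t j\<bar>) / (1 - b1) \<le> 2 / (1 - b1) * SE t"
    using Ek Ej b_facts by (simp add: divide_right_mono)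
  have C1eq: "C1 * (SE t + SR t) = 2 / (1 - b1) * SE t + SE t / ((1 - b1) * q) + SE t / q
        + 2 / (1 - b1) * SR t + SR t / ((1 - b1) * q) + SR t / q"
    by (simp add: C1_def algebra_simps)
  have nn: "0 \<le> SE t / q" "0 \<le> 2 / (1 - b1) * SR t" "0 \<le> SR t / ((1 - b1) * q)"
    using SE_nonneg SR_nonneg q_pos b_facts by auto
  show ?thesis using s1 sX gk gk2 C1eq nn j inner_eq by linarith
qed



lemma step_ineq:
  assumes M: "\<And>t. SE t + SR t \<le> M / sqrt (real (Suc t))" "0 \<le> M"
  shows "eta / sqrt (real (Suc t)) * infnorm (G t)
     \<le> \<L> (th t) - \<L> (th (Suc t)) + (eta * C1 * M + \<bar>Lc\<bar> * eta^2 * (dd * K)^2) / real (Suc t)"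
proof -
  define h where "h = eta / sqrt (real (Suc t))"
  have h0: "0 < h" using eta by (simp add: h_def)
  have ss: "sqrt (real (Suc t)) * sqrt (real (Suc t)) = real (Suc t)" by simp
  have desc: "\<L> (th (Suc t)) \<le> \<L> (th t) + G t \<bullet> (th (Suc t) - th t) + \<bar>Lc\<bar> * (norm (th (Suc t) - th t))^2"
    unfolding G_def by (rule descent[OF deriv lipschitz])
  have "G t \<bullet> (th (Suc t) - th t) = - (h * (G t \<bullet> u (Suc t)))"
    by (simp add: th_Suc h_def)
  moreover have "(norm (th (Suc t) - th t))^2 \<le> (h * (dd * K))^2"
    using step_norm[of t] by (intro power_mono) (auto simp: h_def)
  moreover have "h * (infnorm (G t) - C1 * (SE t + SR t)) \<le> h * (G t \<bullet> u (Suc t))"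
    using h0 inner_lower by (intro mult_left_mono) auto
  moreover have "h * (C1 * (SE t + SR t)) \<le> h * (C1 * (M / sqrt (real (Suc t))))"
    using h0 C1_nonneg M(1)[of t] by (intro mult_left_mono) auto
  moreover have "h * (C1 * (M / sqrt (real (Suc t)))) = eta * C1 * M / real (Suc t)"
    unfolding h_def using ss by (simp add: field_simps)
  moreover have "\<bar>Lc\<bar> * (h * (dd * K))^2 = \<bar>Lc\<bar> * eta^2 * (dd * K)^2 / real (Suc t)"
    unfolding h_def by (simp add: power_mult_distrib power_divide)
  moreover have "0 \<le> \<bar>Lc\<bar>" by simp
  ultimately have "h * infnorm (G t) \<le> \<L> (th t) - \<L> (th (Suc t)) + eta * C1 * M / real (Suc t) + \<bar>Lc\<bar> * eta^2 * (dd * K)^2 / real (Suc t)"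
    using desc by (smt (verit) mult_left_mono right_diff_distrib)
  then show ?thesis by (simp add: h_def add_divide_distrib)
qed

lemma sum_ineq:
  assumes st: "\<And>t. eta / sqrt (real (Suc t)) * infnorm (G t) \<le> \<L> (th t) - \<L> (th (Suc t)) + C2 / real (Suc t)"
  shows "(\<Sum>t<T. eta / sqrt (real (Suc t)) * infnorm (G t)) \<le> \<L> (th 0) - \<L> (th T) + C2 * (\<Sum>t<T. 1 / real (Suc t))"
proof (induction T)
  case 0 then show ?case by simp
next
  case (Suc T)
  then show ?case using st[of T] by (simp add: distrib_left)
qed

lemma final_bigo: "(\<lambda>T. Min ((\<lambda>t. infnorm (G t)) ` {..<T})) \<in> O(\<lambda>T. ln (real T) / sqrt (real T))"
proof -
  obtain M where M: "M \<ge> 0" "\<And>t. SE t + SR t \<le> M / sqrt (real (Suc t))" using SE_SR_bound by blast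
  define C2 where "C2 = eta * C1 * M + \<bar>Lc\<bar> * eta^2 * (dd * K)^2"
  have C20: "0 \<le> C2" unfolding C2_def using eta C1_nonneg M by simp
  define B where "B = \<L> (th 0) - Lstar"
  have B0: "0 \<le> B" using lower by (simp add: B_def)
  have st: "eta / sqrt (real (Suc t)) * infnorm (G t) \<le> \<L> (th t) - \<L> (th (Suc t)) + C2 / real (Suc t)" for t
    unfolding C2_def by (rule step_ineq[OF M(2) M(1)])
  have bound: "Min ((\<lambda>t. infnorm (G t)) ` {..<T}) \<le> (B + 2 * C2) / eta * (ln (real T) / sqrt (real T))"
    if T3: "3 \<le> T" for T
  proof -
    define mn where "mn = Min ((\<lambda>t. infnorm (G t)) ` {..<T})"
    have T1: "1 \<le> T" using T3 by simp
    have mnle: "mn \<le> infnorm (G t)" if "t < T" for t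
      unfolding mn_def using that by (intro Min_le) auto
    have lnT: "1 \<le> ln (real T)"
    proof -
      have "exp 1 \<le> (3::real)" using exp_le by simp
      also have "\<dots> \<le> real T" using T3 by simp
      finally have "ln (exp 1) \<le> ln (real T)" using T3 by (subst ln_le_cancel_iff) auto
      then show ?thesis by simp
    qed
    have sT: "0 < sqrt (real T)" using T1 by simp
    have "eta * sqrt (real T) = (\<Sum>t<T. eta / sqrt (real T))"
    proof -
      have "(\<Sum>t<T. eta / sqrt (real T)) = real T * (eta / sqrt (real T))" by simp
      also have "\<dots> = eta * sqrt (real T)" using sT
        by (simp add: field_simps)
      finally show ?thesis by simp
    qed
    also have "\<dots> \<le> (\<Sum>t<T. eta / sqrt (real (Suc t)))"
      using eta by (intro sum_mono divide_left_mono) auto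
    finally have "eta * sqrt (real T) * mn \<le> (\<Sum>t<T. eta / sqrt (real (Suc t))) * mn"
    proof -
      assume a: "eta * sqrt (real T) \<le> (\<Sum>t<T. eta / sqrt (real (Suc t)))"
      have ne: "{..<T} \<noteq> {}" using T1 by (metis lessThan_iff less_le_trans zero_less_one empty_iff)
      have "0 \<le> mn" unfolding mn_def using ne
        by (subst Min_ge_iff) (auto simp: infnorm_pos_le)
      then show ?thesis using a by (intro mult_right_mono) auto
    qed
    also have "\<dots> = (\<Sum>t<T. eta / sqrt (real (Suc t)) * mn)" by (simp add: sum_distrib_right)
    also have "\<dots> \<le> (\<Sum>t<T. eta / sqrt (real (Suc t)) * infnorm (G t))"
      using eta mnle by (intro sum_mono mult_left_mono) auto
    also have "\<dots> \<le> \<L> (th 0) - \<L> (th T) + C2 * (\<Sum>t<T. 1 / real (Suc t))"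
      by (rule sum_ineq[OF st])
    also have "\<dots> \<le> B + C2 * (1 + ln (real T))"
      using lower[of "th T"] harm_bound[OF T1] C20 unfolding B_def by (smt (verit) mult_left_mono)
    also have "\<dots> \<le> (B + 2 * C2) * ln (real T)"
    proof -
      have "B * 1 \<le> B * ln (real T)" "C2 * 1 \<le> C2 * ln (real T)"
        using lnT B0 C20 by (intro mult_left_mono; simp)+
      then show ?thesis by (simp add: algebra_simps)
    qed
    finally have "eta * sqrt (real T) * mn \<le> (B + 2 * C2) * ln (real T)" .
    then have "mn \<le> (B + 2 * C2) * ln (real T) / (eta * sqrt (real T))"
      using eta sT by (simp add: le_divide_eq mult.commute)
    then show ?thesis by (simp add: mn_def)
  qed
  show ?thesis
  proof (rule bigoI[where c = "(B + 2 * C2) / eta"])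
    show "\<forall>\<^sub>F T in at_top. norm (Min ((\<lambda>t. infnorm (G t)) ` {..<T})) \<le> (B + 2 * C2) / eta * norm (ln (real T) / sqrt (real T))"
      unfolding eventually_at_top_linorder
    proof (intro exI[of _ 3] allI impI)
      fix T :: nat assume T3: "3 \<le> T"
      have ne: "{..<T} \<noteq> {}" using T3 by (metis lessThan_iff less_le_trans zero_less_numeral empty_iff of_nat_0_less_iff)
      have "0 \<le> Min ((\<lambda>t. infnorm (G t)) ` {..<T})" using ne
        by (subst Min_ge_iff) (auto simp: infnorm_pos_le)
      moreover have "0 \<le> ln (real T) / sqrt (real T)" using T3 by simp
      moreover have "\<bar>ln (real T)\<bar> = ln (real T)" using T3 by simp
      ultimately show "norm (Min ((\<lambda>t. infnorm (G t)) ` {..<T})) \<le> (B + 2 * C2) / eta * norm (ln (real T) / sqrt (real T))"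
        using bound[OF T3] by simp
    qed
  qed
qed

end

theorem theorem1:
  fixes \<L> :: "(real,'n::{finite,linorder}) vec \<Rightarrow> real"
    and grad :: "(real,'n) vec \<Rightarrow> (real,'n) vec"
    and blk :: "'n \<Rightarrow> nat"
    and Lstar Lc alpha b1 b2 eta :: real
    and th0 :: "(real,'n) vec"
  assumes deriv: "\<And>x. (\<L> has_derivative (\<lambda>h. grad x \<bullet> h)) (at x)"
    and lower: "\<And>x. Lstar \<le> \<L> x"
    and lipschitz: "\<And>x y. norm (grad x - grad y) \<le> Lc * norm (x - y)"
    and blocks: "mono blk"
    and alpha: "0 < alpha" "alpha \<le> 1"
    and betas: "0 < b1" "b1 < sqrt b2" "sqrt b2 < 1"
    and eta: "0 < eta"
  shows "(\<lambda>T::nat. Min ((\<lambda>t. infnorm (grad (mofo_theta blk alpha grad b1 b2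
              (\<lambda>t. eta / sqrt (real t)) th0 t))) ` {..<T}))
         \<in> O(\<lambda>T. ln (real T) / sqrt (real T))"
proof -
  interpret I: mctx \<L> grad blk Lstar Lc alpha b1 b2 eta th0
    using deriv lower lipschitz alpha betas eta by unfold_locales auto
  have "(\<lambda>T::nat. Min ((\<lambda>t. infnorm (grad (mofo_theta blk alpha grad b1 b2
              (\<lambda>t. eta / sqrt (real t)) th0 t))) ` {..<T}))
      = (\<lambda>T. Min ((\<lambda>t. infnorm (I.G t)) ` {..<T}))"
    by (simp add: I.G_def I.th_def I.st_def mofo_theta_def)
  then show ?thesis using I.final_bigo by simp
qed

end
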